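(* Let $\gamma,\sigma:[a,b]\to V$ be continuous paths of bounded variation. (1) For $\phi(k)=\Gamma(\frac k2+1)$, \[ K_\phi^{\gamma,\sigma}(s,t)=\mathbb{E}_\pi\left[K^{\pi^{1/2}\gamma,\sigma}(s,t)\right]=\mathbb{E}_\pi\left[K^{\gamma,\pi^{1/2}\sigma}(s,t)\right], \] where $\pi\sim\mathrm{Exp}(1)$. (2) For $m>0$ and $\phi(k)=\frac{\Gamma(m+1)\Gamma(k+1)}{\Gamma(k+m+1)}$, \[ K_\phi^{\gamma,\sigma}(s,t)=\mathbb{E}_\pi\left[K^{\pi\gamma,\sigma}(s,t)\right]=\mathbb{E}_\pi\left[K^{\gamma,\pi\sigma}(s,t)\right], \] where $\pi\sim\mathrm{Beta}(1,m)$.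
   Context: $V$ is a finite-dimensional real inner product space, $\langle\cdot,\cdot\rangle_k$ the induced Hilbert–Schmidt inner product on $V^{\otimes k}$. Signature: $S(\gamma)^0=1$, $S(\gamma)^k_{s,t}=\int_{s<u_1<\dots<u_k<t}d\gamma_{u_1}\otimes\cdots\otimes d\gamma_{u_k}$. $K_\phi^{\gamma,\sigma}(s,t)=\sum_{k\ge0}\phi(k)\langle S(\gamma)^k_{a,s},S(\sigma)^k_{a,t}\rangle_k$; $K^{\gamma,\sigma}$ denotes this with $\phi\equiv1$; $c\gamma$ is the pointwise rescaled path. *)

theory Defs
  imports "HOL-Analysis.Analysis" "HOL-Probability.Probability"
begin

definition partition_of :: "real \<Rightarrow> real \<Rightarrow> real list \<Rightarrow> bool" where
  "partition_of a b xs \<longleftrightarrow> xs \<noteq> [] \<and> hd xs = a \<and> last xs = b \<and> sorted_wrt (<) xs"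

definition variation_sum :: "(real \<Rightarrow> 'a::real_normed_vector) \<Rightarrow> real list \<Rightarrow> real" where
  "variation_sum g xs = (\<Sum>j<length xs - 1. norm (g (xs ! Suc j) - g (xs ! j)))"

definition bounded_variation_on :: "real \<Rightarrow> real \<Rightarrow> (real \<Rightarrow> 'a::real_normed_vector) \<Rightarrow> bool" where
  "bounded_variation_on a b g \<longleftrightarrow> (\<exists>B. \<forall>xs. partition_of a b xs \<longrightarrow> variation_sum g xs \<le> B)"

definition has_rs_integral ::
  "(real \<Rightarrow> real) \<Rightarrow> (real \<Rightarrow> real) \<Rightarrow> real \<Rightarrow> real \<Rightarrow> real \<Rightarrow> bool" where
  "has_rs_integral f g a b I \<longleftrightarrow>
     (\<forall>e>0. \<exists>d>0. \<forall>xs tag. partition_of a b xs \<and>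
        (\<forall>j<length xs - 1. xs ! j \<le> tag j \<and> tag j \<le> xs ! Suc j \<and> xs ! Suc j - xs ! j < d)
        \<longrightarrow> \<bar>(\<Sum>j<length xs - 1. f (tag j) * (g (xs ! Suc j) - g (xs ! j))) - I\<bar> < e)"

definition rs_integral :: "(real \<Rightarrow> real) \<Rightarrow> (real \<Rightarrow> real) \<Rightarrow> real \<Rightarrow> real \<Rightarrow> real" where
  "rs_integral f g a b = (THE I. has_rs_integral f g a b I)"

text \<open>V is a finite-dimensional real inner product space ('a::euclidean_space) with
  orthonormal basis Basis; V^{\<otimes>k} is represented by coefficient functions on words
  (lists of basis vectors of length k); the Hilbert--Schmidt inner product is the
  sum of products of coefficients.\<close>

definition words :: "nat \<Rightarrow> 'a::euclidean_space list set" where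
  "words k = {w. length w = k \<and> set w \<subseteq> Basis}"

text \<open>sig_rev \<gamma> a w t is the iterated integral over a<u_1<...<u_n<t of
  d\<gamma>^{i_1}...d\<gamma>^{i_n} where (i_1,...,i_n) = rev w (head of w = last letter).\<close>
fun sig_rev :: "(real \<Rightarrow> 'a::euclidean_space) \<Rightarrow> real \<Rightarrow> 'a list \<Rightarrow> real \<Rightarrow> real" where
  "sig_rev \<gamma> a [] t = 1"
| "sig_rev \<gamma> a (i # w) t = rs_integral (\<lambda>u. sig_rev \<gamma> a w u) (\<lambda>u. \<gamma> u \<bullet> i) a t"

text \<open>Coefficient of e_{i_1}\<otimes>...\<otimes>e_{i_k} in S(\<gamma>)^k_{a,t}, for w = [i_1,...,i_k].\<close>
definition sig_coord :: "(real \<Rightarrow> 'a::euclidean_space) \<Rightarrow> real \<Rightarrow> real \<Rightarrow> 'a list \<Rightarrow> real" where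
  "sig_coord \<gamma> a t w = sig_rev \<gamma> a (rev w) t"

definition tensor_inner :: "nat \<Rightarrow> ('a::euclidean_space list \<Rightarrow> real) \<Rightarrow> ('a list \<Rightarrow> real) \<Rightarrow> real" where
  "tensor_inner k A B = (\<Sum>w\<in>words k. A w * B w)"

definition sig_kernel ::
  "(nat \<Rightarrow> real) \<Rightarrow> (real \<Rightarrow> 'a::euclidean_space) \<Rightarrow> (real \<Rightarrow> 'a) \<Rightarrow> real \<Rightarrow> real \<Rightarrow> real \<Rightarrow> real" where
  "sig_kernel \<phi> \<gamma> \<sigma> a s t = (\<Sum>k. \<phi> k * tensor_inner k (sig_coord \<gamma> a s) (sig_coord \<sigma> a t))"

definition rescale_path :: "real \<Rightarrow> (real \<Rightarrow> 'a::real_vector) \<Rightarrow> real \<Rightarrow> 'a" where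
  "rescale_path c \<gamma> = (\<lambda>u. c *\<^sub>R \<gamma> u)"

definition beta_density :: "real \<Rightarrow> real \<Rightarrow> real \<Rightarrow> real" where
  "beta_density \<alpha> \<beta> x = (if 0 < x \<and> x < 1 then x powr (\<alpha> - 1) * (1 - x) powr (\<beta> - 1) / Beta \<alpha> \<beta> else 0)"

end

theory Submission
  imports Defs
begin



definition rsum :: "(real \<Rightarrow> real) \<Rightarrow> (real \<Rightarrow> real) \<Rightarrow> real list \<Rightarrow> (nat \<Rightarrow> real) \<Rightarrow> real" where
  "rsum f g xs tag = (\<Sum>j<length xs - 1. f (tag j) * (g (xs ! Suc j) - g (xs ! j)))"

definition gfine :: "real \<Rightarrow> real \<Rightarrow> real \<Rightarrow> real list \<Rightarrow> (nat \<Rightarrow> real) \<Rightarrow> bool" where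
  "gfine a b \<delta> xs \<tau> \<longleftrightarrow> (\<forall>j<length xs - 1. \<tau> j \<in> {a..b} \<and> \<bar>\<tau> j - xs!j\<bar> < \<delta> \<and> \<bar>\<tau> j - xs ! Suc j\<bar> < \<delta>)"

lemma partition_nth_bounds:
  assumes "partition_of a b xs" "j < length xs"
  shows "a \<le> xs!j \<and> xs!j \<le> b"
proof -
  have ne: "xs \<noteq> []" and h: "hd xs = a" and l: "last xs = b" and s: "sorted_wrt (<) xs"
    using assms(1) unfolding partition_of_def by auto
  have "xs!0 \<le> xs!j"
    using s assms(2) by (cases "j = 0") (auto simp: sorted_wrt_iff_nth_less intro: less_imp_le)
  moreover have "xs!j \<le> xs!(length xs - 1)"
    using s assms(2) by (cases "j = length xs - 1") (auto simp: sorted_wrt_iff_nth_less intro: less_imp_le)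
  ultimately show ?thesis using ne h l by (simp add: hd_conv_nth last_conv_nth)
qed

lemma partition_le: "partition_of a b xs \<Longrightarrow> a \<le> b"
  using partition_nth_bounds[of a b xs 0] by (auto simp: partition_of_def)

lemma partition_single:
  assumes "partition_of a a xs" shows "xs = [a]"
proof (cases xs)
  case Nil then show ?thesis using assms by (auto simp: partition_of_def)
next
  case (Cons x ys)
  show ?thesis
  proof (cases ys)
    case Nil then show ?thesis using assms Cons by (auto simp: partition_of_def)
  next
    case (Cons y zs)
    have "last ys \<in> set ys" using Cons by simp
    then have "x < last ys" using assms \<open>xs = x # ys\<close> by (auto simp: partition_of_def)
    then show ?thesis using assms \<open>xs = x # ys\<close> Cons by (auto simp: partition_of_def)
  qed
qed

lemma partition_len1: "partition_of u v xs \<Longrightarrow> length xs = 1 \<Longrightarrow> u = v \<and> xs = [u]"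
  by (cases xs) (auto simp: partition_of_def)

lemma partition_Cons2:
  assumes "partition_of u v (u' # x # r)"
  shows "u' = u \<and> u < x \<and> partition_of x v (x # r)"
  using assms by (auto simp: partition_of_def)

lemma partition_Cons2I:
  assumes "u < x" "partition_of x v (x # r)"
  shows "partition_of u v (u # x # r)"
proof -
  have s: "sorted_wrt (<) (x # r)" using assms by (auto simp: partition_of_def)
  then have "\<forall>y\<in>set r. u < y" using assms(1) by auto
  then show ?thesis using assms s by (auto simp: partition_of_def)
qed

lemma rsum_single[simp]: "rsum f g [x] \<tau> = 0"
  by (simp add: rsum_def)

lemma rsum_Cons2:
  "rsum f g (x # y # r) \<tau> = f (\<tau> 0) * (g y - g x) + rsum f g (y # r) (\<lambda>j. \<tau> (Suc j))"
  unfolding rsum_def by (simp add: sum.lessThan_Suc_shift del: sum.lessThan_Suc)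

lemma gfine_tail: "gfine a b \<delta> (x # y # r) \<tau> \<Longrightarrow> gfine a b \<delta> (y # r) (\<lambda>j. \<tau> (Suc j))"
  unfolding gfine_def by auto

lemma gfine_head: "gfine a b \<delta> (x # y # r) \<tau> \<Longrightarrow> \<tau> 0 \<in> {a..b} \<and> \<bar>\<tau> 0 - x\<bar> < \<delta> \<and> \<bar>\<tau> 0 - y\<bar> < \<delta>"
  unfolding gfine_def by auto

lemma gfine_replace_head:
  assumes "gfine a b \<delta> (u # y # r) \<tau>" "u \<le> x" "x \<le> y"
  shows "gfine a b \<delta> (x # y # r) \<tau>"
  unfolding gfine_def
proof (intro allI impI)
  fix j assume j: "j < length (x # y # r) - 1"
  show "\<tau> j \<in> {a..b} \<and> \<bar>\<tau> j - (x # y # r) ! j\<bar> < \<delta> \<and> \<bar>\<tau> j - (x # y # r) ! Suc j\<bar> < \<delta>"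
  proof (cases j)
    case 0
    have "\<tau> 0 \<in> {a..b}" "\<bar>\<tau> 0 - u\<bar> < \<delta>" "\<bar>\<tau> 0 - y\<bar> < \<delta>" using gfine_head[OF assms(1)] by auto
    then show ?thesis using 0 assms(2,3) by (auto simp: abs_less_iff)
  next
    case (Suc k)
    then show ?thesis using assms(1) j unfolding gfine_def by (metis length_Cons nth_Cons_Suc)
  qed
qed

lemma rsum_cauchy:
  assumes dpos: "\<delta> > 0" and md: "\<forall>x\<in>{a..b}. \<forall>y\<in>{a..b}. \<bar>x - y\<bar> < 2*\<delta> \<longrightarrow> \<bar>f x - f y\<bar> \<le> \<epsilon>"
    and inc: "\<forall>x y. a \<le> x \<longrightarrow> x \<le> y \<longrightarrow> y \<le> b \<longrightarrow> \<bar>g y - g x\<bar> \<le> V y - V x"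
  shows "length xs + length ys = n \<Longrightarrow> partition_of u v xs \<Longrightarrow> partition_of u v ys \<Longrightarrow> a \<le> u \<Longrightarrow> v \<le> b
     \<Longrightarrow> gfine a b \<delta> xs \<tau> \<Longrightarrow> gfine a b \<delta> ys \<sigma>
     \<Longrightarrow> \<bar>rsum f g xs \<tau> - rsum f g ys \<sigma>\<bar> \<le> \<epsilon> * (V v - V u)"
proof (induction n arbitrary: u xs ys \<tau> \<sigma> rule: less_induct)
  case (less n u xs ys \<tau> \<sigma>)
  have uv: "u \<le> v" using partition_le less.prems(2) .
  have ab: "a \<le> b" using less.prems(4,5) uv by linarith
  have eps: "0 \<le> \<epsilon>" using md[rule_format, of a a] ab dpos by simp
  have key: "\<bar>rsum f g (u#x1#xr) \<tau>' - rsum f g (u#y1#yr) \<sigma>'\<bar> \<le> \<epsilon> * (V v - V u)"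
    if xy: "x1 \<le> y1" and len: "length xr + length yr + 4 = n"
      and px: "partition_of u v (u#x1#xr)" and py: "partition_of u v (u#y1#yr)"
      and gx: "gfine a b \<delta> (u#x1#xr) \<tau>'" and gy: "gfine a b \<delta> (u#y1#yr) \<sigma>'"
    for x1 xr y1 yr \<tau>' \<sigma>'
  proof -
    have ux: "u < x1" and px': "partition_of x1 v (x1#xr)" using partition_Cons2[OF px] by auto
    have uy: "u < y1" and py': "partition_of y1 v (y1#yr)" using partition_Cons2[OF py] by auto
    have x1v: "x1 \<le> v" using partition_le[OF px'] .
    have t0: "\<tau>' 0 \<in> {a..b}" "\<bar>\<tau>' 0 - u\<bar> < \<delta>" using gfine_head[OF gx] by auto
    have s0: "\<sigma>' 0 \<in> {a..b}" "\<bar>\<sigma>' 0 - u\<bar> < \<delta>" using gfine_head[OF gy] by auto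
    have "\<bar>\<tau>' 0 - \<sigma>' 0\<bar> < 2*\<delta>" using t0 s0 by (auto simp: abs_less_iff)
    then have hf: "\<bar>f (\<tau>' 0) - f (\<sigma>' 0)\<bar> \<le> \<epsilon>" using md t0 s0 by auto
    have hg: "\<bar>g x1 - g u\<bar> \<le> V x1 - V u" using inc less.prems(4,5) ux x1v by auto
    have e1: "\<bar>(f (\<tau>' 0) - f (\<sigma>' 0)) * (g x1 - g u)\<bar> \<le> \<epsilon> * (V x1 - V u)"
      unfolding abs_mult by (rule mult_mono[OF hf hg eps]) simp
    obtain ys' \<sigma>'' where ys': "rsum f g (u#y1#yr) \<sigma>' = f (\<sigma>' 0) * (g x1 - g u) + rsum f g ys' \<sigma>''"
      and pys: "partition_of x1 v ys'" and gys: "gfine a b \<delta> ys' \<sigma>''"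
      and lys: "length ys' \<le> length (u#y1#yr)"
    proof (cases "x1 = y1")
      case True
      show ?thesis
        by (rule that[of "y1#yr" "\<lambda>j. \<sigma>' (Suc j)"]) (use True py' gfine_tail[OF gy] in \<open>auto simp: rsum_Cons2\<close>)
    next
      case False
      then have "x1 < y1" using xy by simp
      show ?thesis
      proof (rule that[of "x1#y1#yr" "\<sigma>'"])
        show "rsum f g (u # y1 # yr) \<sigma>' = f (\<sigma>' 0) * (g x1 - g u) + rsum f g (x1 # y1 # yr) \<sigma>'"
          by (simp add: rsum_Cons2 algebra_simps)
        show "partition_of x1 v (x1 # y1 # yr)" using partition_Cons2I[OF \<open>x1 < y1\<close> py'] .
        show "gfine a b \<delta> (x1 # y1 # yr) \<sigma>'" using gfine_replace_head[OF gy] ux \<open>x1 < y1\<close> by auto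
      qed simp
    qed
    have IH: "\<bar>rsum f g (x1#xr) (\<lambda>j. \<tau>' (Suc j)) - rsum f g ys' \<sigma>''\<bar> \<le> \<epsilon> * (V v - V x1)"
      by (rule less.IH[OF _ refl px' pys _ less.prems(5) gfine_tail[OF gx] gys])
         (use len lys less.prems(4) ux in auto)
    have "rsum f g (u#x1#xr) \<tau>' - rsum f g (u#y1#yr) \<sigma>'
        = (f (\<tau>' 0) - f (\<sigma>' 0)) * (g x1 - g u) + (rsum f g (x1#xr) (\<lambda>j. \<tau>' (Suc j)) - rsum f g ys' \<sigma>'')"
      unfolding ys' rsum_Cons2[of f g u x1 xr] by (simp add: algebra_simps)
    then have "\<bar>rsum f g (u#x1#xr) \<tau>' - rsum f g (u#y1#yr) \<sigma>'\<bar> \<le> \<epsilon> * (V x1 - V u) + \<epsilon> * (V v - V x1)"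
      using e1 IH abs_triangle_ineq[of "(f (\<tau>' 0) - f (\<sigma>' 0)) * (g x1 - g u)" "rsum f g (x1#xr) (\<lambda>j. \<tau>' (Suc j)) - rsum f g ys' \<sigma>''"] by linarith
    also have "\<dots> = \<epsilon> * (V v - V u)" by (simp add: algebra_simps)
    finally show ?thesis .
  qed
  have lx: "length xs \<ge> 1" "length ys \<ge> 1" using less.prems(2,3) by (auto simp: partition_of_def Suc_le_eq)
  show ?case
  proof (cases "length xs = 1 \<or> length ys = 1")
    case True
    then have "u = v" using partition_len1 less.prems(2,3) by blast
    then have "xs = [u]" "ys = [u]" using partition_single less.prems(2,3) by auto
    then show ?thesis using \<open>u = v\<close> by simp
  next
    case False
    then have "length xs \<ge> 2" "length ys \<ge> 2" using lx by auto
    then obtain x0 x1 xr y0 y1 yr where xs: "xs = x0#x1#xr" and ys: "ys = y0#y1#yr"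
      by (auto simp: numeral_2_eq_2 Suc_le_length_iff)
    have "x0 = u" "y0 = u" using partition_Cons2 less.prems(2,3) xs ys by auto
    note * = xs ys this
    show ?thesis
    proof (cases "x1 \<le> y1")
      case True
      show ?thesis using key[OF True _ _ _ less.prems(6,7)[unfolded *]] less.prems(1-3) * by auto
    next
      case False
      have "\<bar>rsum f g ys \<sigma> - rsum f g xs \<tau>\<bar> \<le> \<epsilon> * (V v - V u)"
        using key[of y1 x1 yr xr, OF _ _ _ _ less.prems(7,6)[unfolded *]] False less.prems(1-3) * by auto
      then show ?thesis by (simp add: abs_minus_commute)
    qed
  qed
qed




definition pts :: "real \<Rightarrow> real \<Rightarrow> nat \<Rightarrow> nat \<Rightarrow> real" where
  "pts u v n j = u + (v - u) * real j / real (Suc n)"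

definition unif :: "real \<Rightarrow> real \<Rightarrow> nat \<Rightarrow> real list" where
  "unif u v n = map (pts u v n) [0..<Suc (Suc n)]"

lemma unif_length[simp]: "length (unif u v n) = Suc (Suc n)"
  by (simp add: unif_def)

lemma unif_nth[simp]: "j < Suc (Suc n) \<Longrightarrow> unif u v n ! j = pts u v n j"
  by (simp add: unif_def del: upt_Suc)

lemma pts_step: "pts u v n (Suc j) - pts u v n j = (v - u) / real (Suc n)"
proof -
  have "(v - u) * real (Suc j) = (v - u) * real j + (v - u)" by (simp add: algebra_simps)
  then have "(v - u) * real (Suc j) / real (Suc n) = (v - u) * real j / real (Suc n) + (v - u) / real (Suc n)"
    by (simp add: add_divide_distrib)
  then show ?thesis unfolding pts_def by linarith
qed

lemma unif_partition:
  assumes "u < v" shows "partition_of u v (unif u v n)"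
proof -
  have mono: "pts u v n i < pts u v n j" if "i < j" for i j
  proof -
    have "(v - u) * real i < (v - u) * real j" using assms that by simp
    then show ?thesis unfolding pts_def by (simp add: divide_strict_right_mono)
  qed
  have "sorted_wrt (<) (unif u v n)"
    unfolding sorted_wrt_iff_nth_less using mono by simp
  moreover have ne: "unif u v n \<noteq> []" by (simp add: unif_def del: upt_Suc)
  moreover have "hd (unif u v n) = u" using ne by (simp add: hd_conv_nth pts_def)
  moreover have "last (unif u v n) = v"
  proof -
    have "(v - u) * real (Suc n) / real (Suc n) = v - u" by (rule nonzero_mult_div_cancel_right) simp
    then have "pts u v n (Suc n) = v" unfolding pts_def by simp
    then show ?thesis using ne by (simp add: last_conv_nth)
  qed
  ultimately show ?thesis by (simp add: partition_of_def)
qed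

lemma exists_fine:
  assumes "a \<le> u" "d > 0"
  shows "\<exists>xs. partition_of a u xs \<and> (\<forall>j<length xs - 1. xs ! Suc j - xs ! j < d)"
proof (cases "a = u")
  case True
  then show ?thesis by (intro exI[of _ "[a]"]) (simp add: partition_of_def)
next
  case False
  then have au: "a < u" using assms by simp
  obtain n :: nat where n: "(u - a) / d < real n" using reals_Archimedean2 by blast
  have "(u - a) < d * real n" using n assms(2) by (simp add: field_simps)
  also have "\<dots> \<le> d * real (Suc n)" using assms(2) by simp
  finally have "(u - a) / real (Suc n) < d" by (simp add: field_simps)
  then show ?thesis
    by (intro exI[of _ "unif a u n"]) (simp add: unif_partition[OF au] pts_step)
qed

lemma has_rs_integral_rsum:
  "has_rs_integral f g a b I \<longleftrightarrow>
     (\<forall>e>0. \<exists>d>0. \<forall>xs tag. partition_of a b xs \<and>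
        (\<forall>j<length xs - 1. xs ! j \<le> tag j \<and> tag j \<le> xs ! Suc j \<and> xs ! Suc j - xs ! j < d)
        \<longrightarrow> \<bar>rsum f g xs tag - I\<bar> < e)"
  unfolding has_rs_integral_def rsum_def ..

lemma fine_imp_gfine:
  assumes "partition_of u v xs" "\<forall>j<length xs - 1. xs ! j \<le> tag j \<and> tag j \<le> xs ! Suc j \<and> xs ! Suc j - xs ! j < d"
    "a \<le> u" "v \<le> b"
  shows "gfine a b d xs tag"
  unfolding gfine_def
proof (intro allI impI)
  fix j assume j: "j < length xs - 1"
  have "u \<le> xs!j" "xs ! Suc j \<le> v" using partition_nth_bounds[OF assms(1)] j by auto
  then show "tag j \<in> {a..b} \<and> \<bar>tag j - xs ! j\<bar> < d \<and> \<bar>tag j - xs ! Suc j\<bar> < d"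
    using assms(2) j assms(3,4) by (auto simp: abs_less_iff)
qed

lemma partition_mono:
  assumes "partition_of a b xs" "Suc j < length xs" shows "xs ! j < xs ! Suc j"
  using assms unfolding partition_of_def sorted_wrt_iff_nth_less by auto

lemma pts_mono_Suc: "u \<le> v \<Longrightarrow> pts u v n j \<le> pts u v n (Suc j)"
proof -
  assume "u \<le> v"
  then have "(v - u) / real (Suc n) \<ge> 0" by simp
  then show ?thesis using pts_step[of u v n j] by linarith
qed

lemma rs_unique:
  assumes "a \<le> u" "has_rs_integral F G a u I" "has_rs_integral F G a u J"
  shows "I = J"
proof (rule ccontr)
  assume ne: "I \<noteq> J"
  define e where "e = \<bar>I - J\<bar> / 2"
  have e: "e > 0" using ne by (simp add: e_def)
  obtain d1 where d1: "d1 > 0" "\<forall>xs tag. partition_of a u xs \<and>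
        (\<forall>j<length xs - 1. xs ! j \<le> tag j \<and> tag j \<le> xs ! Suc j \<and> xs ! Suc j - xs ! j < d1)
        \<longrightarrow> \<bar>rsum F G xs tag - I\<bar> < e" using assms(2) e unfolding has_rs_integral_rsum by blast
  obtain d2 where d2: "d2 > 0" "\<forall>xs tag. partition_of a u xs \<and>
        (\<forall>j<length xs - 1. xs ! j \<le> tag j \<and> tag j \<le> xs ! Suc j \<and> xs ! Suc j - xs ! j < d2)
        \<longrightarrow> \<bar>rsum F G xs tag - J\<bar> < e" using assms(3) e unfolding has_rs_integral_rsum by blast
  obtain xs where xs: "partition_of a u xs" "\<forall>j<length xs - 1. xs ! Suc j - xs ! j < min d1 d2"
    using exists_fine[OF assms(1), of "min d1 d2"] d1 d2 by auto
  have fine: "\<forall>j<length xs - 1. xs ! j \<le> xs ! j \<and> xs ! j \<le> xs ! Suc j \<and> xs ! Suc j - xs ! j < d1"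
    "\<forall>j<length xs - 1. xs ! j \<le> xs ! j \<and> xs ! j \<le> xs ! Suc j \<and> xs ! Suc j - xs ! j < d2"
    using xs(2) partition_mono[OF xs(1)] by (auto simp: less_imp_le)
  have h1: "\<bar>rsum F G xs (\<lambda>j. xs!j) - I\<bar> < e" and h2: "\<bar>rsum F G xs (\<lambda>j. xs!j) - J\<bar> < e"
    using d1(2) d2(2) xs(1) fine by blast+
  have h3: "\<bar>I - J\<bar> \<le> \<bar>rsum F G xs (\<lambda>j. xs!j) - J\<bar> + \<bar>rsum F G xs (\<lambda>j. xs!j) - I\<bar>"
    using abs_triangle_ineq4[of "rsum F G xs (\<lambda>j. xs!j) - J" "rsum F G xs (\<lambda>j. xs!j) - I"] by simp
  have "\<bar>rsum F G xs (\<lambda>j. xs!j) - J\<bar> + \<bar>rsum F G xs (\<lambda>j. xs!j) - I\<bar> < e + e"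
    by (rule add_strict_mono[OF h2 h1])
  with h3 have "\<bar>I - J\<bar> < e + e" by (rule order.strict_trans1)
  then show False using e_def by simp
qed

lemma rs_integral_eq:
  assumes "a \<le> u" "has_rs_integral F G a u I"
  shows "rs_integral F G a u = I"
  unfolding rs_integral_def using rs_unique[OF assms(1) assms(2)] assms(2) by blast

lemma mod_exists:
  fixes F :: "real \<Rightarrow> real"
  assumes "continuous_on {a..b} F" "\<epsilon> > 0"
  shows "\<exists>\<delta>>0. \<forall>x\<in>{a..b}. \<forall>y\<in>{a..b}. \<bar>x - y\<bar> < 2*\<delta> \<longrightarrow> \<bar>F x - F y\<bar> \<le> \<epsilon>"
proof -
  have "uniformly_continuous_on {a..b} F"
    using compact_uniformly_continuous[OF assms(1)] by simp
  then obtain d where d: "d > 0" "\<forall>x\<in>{a..b}. \<forall>x'\<in>{a..b}. dist x' x < d \<longrightarrow> dist (F x') (F x) < \<epsilon>"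
    using assms(2) unfolding uniformly_continuous_on_def by blast
  show ?thesis
  proof (intro exI[of _ "d/2"] conjI ballI impI)
    fix x y assume "x \<in> {a..b}" "y \<in> {a..b}" "\<bar>x - y\<bar> < 2 * (d / 2)"
    then have "dist (F x) (F y) < \<epsilon>" using d(2) by (auto simp: dist_real_def)
    then show "\<bar>F x - F y\<bar> \<le> \<epsilon>" by (simp add: dist_real_def)
  qed (use d in auto)
qed

lemma rs_exists_pos:
  assumes au: "a < u" and cF: "continuous_on {a..u} F"
    and inc: "\<forall>x y. a \<le> x \<longrightarrow> x \<le> y \<longrightarrow> y \<le> u \<longrightarrow> \<bar>G y - G x\<bar> \<le> V y - V x"
  shows "\<exists>I. has_rs_integral F G a u I \<and> (\<forall>\<delta> \<epsilon>. \<delta> > 0 \<longrightarrow>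
      (\<forall>x\<in>{a..u}. \<forall>y\<in>{a..u}. \<bar>x - y\<bar> < 2*\<delta> \<longrightarrow> \<bar>F x - F y\<bar> \<le> \<epsilon>) \<longrightarrow>
      (\<forall>xs \<tau>. partition_of a u xs \<longrightarrow> gfine a u \<delta> xs \<tau> \<longrightarrow> \<bar>rsum F G xs \<tau> - I\<bar> \<le> \<epsilon> * (V u - V a)))"
proof -
  define Vt where "Vt = V u - V a"
  have Vt: "Vt \<ge> 0" using inc au unfolding Vt_def by (metis abs_ge_zero order.trans order_refl less_imp_le)
  define S where "S n = rsum F G (unif a u n) (pts a u n)" for n
  have gfu: "gfine a u \<delta> (unif a u n) (pts a u n)" if "(u - a) / real (Suc n) < \<delta>" for \<delta> n
  proof -
    have p: "partition_of a u (unif a u n)" using unif_partition[OF au] .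
    show ?thesis
      by (rule fine_imp_gfine[OF p]) (use that au in \<open>auto simp: pts_step pts_mono_Suc\<close>)
  qed
  have C: "\<bar>rsum F G xs \<tau> - S n\<bar> \<le> \<epsilon> * Vt"
    if "\<delta> > 0" "\<forall>x\<in>{a..u}. \<forall>y\<in>{a..u}. \<bar>x - y\<bar> < 2*\<delta> \<longrightarrow> \<bar>F x - F y\<bar> \<le> \<epsilon>"
      "(u - a) / real (Suc n) < \<delta>" "partition_of a u xs" "gfine a u \<delta> xs \<tau>" for \<delta> \<epsilon> n xs \<tau>
    unfolding S_def Vt_def
    by (rule rsum_cauchy[OF that(1,2) inc refl that(4) unif_partition[OF au] order_refl order_refl that(5) gfu[OF that(3)]])
  have goodd: "\<exists>\<delta> \<epsilon>. \<delta> > 0 \<and> (\<forall>x\<in>{a..u}. \<forall>y\<in>{a..u}. \<bar>x - y\<bar> < 2*\<delta> \<longrightarrow> \<bar>F x - F y\<bar> \<le> \<epsilon>) \<and> \<epsilon> * Vt < e"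
    if "e > 0" for e
  proof -
    define \<epsilon> where "\<epsilon> = e / (Vt + 1)"
    have "\<epsilon> > 0" using that Vt by (simp add: \<epsilon>_def)
    then obtain \<delta> where "\<delta> > 0" "\<forall>x\<in>{a..u}. \<forall>y\<in>{a..u}. \<bar>x - y\<bar> < 2*\<delta> \<longrightarrow> \<bar>F x - F y\<bar> \<le> \<epsilon>"
      using mod_exists[OF cF] by blast
    moreover have "\<epsilon> * Vt < e" using that Vt unfolding \<epsilon>_def by (simp add: field_simps)
    ultimately show ?thesis by blast
  qed
  have NN: "\<exists>N. \<forall>n\<ge>N. (u - a) / real (Suc n) < \<delta>" if "\<delta> > 0" for \<delta>
  proof -
    obtain N :: nat where N: "(u - a) / \<delta> < real N" using reals_Archimedean2 by blast
    have "(u - a) / real (Suc n) < \<delta>" if "n \<ge> N" for n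
    proof -
      have "(u - a) < \<delta> * real N" using N \<open>\<delta> > 0\<close> by (simp add: field_simps)
      also have "\<dots> \<le> \<delta> * real (Suc n)" using that \<open>\<delta> > 0\<close> by simp
      finally show ?thesis by (simp add: field_simps)
    qed
    then show ?thesis by blast
  qed
  have "Cauchy S"
  proof (rule metric_CauchyI)
    fix e :: real assume "e > 0"
    then obtain \<delta> \<epsilon> where d: "\<delta> > 0" "\<forall>x\<in>{a..u}. \<forall>y\<in>{a..u}. \<bar>x - y\<bar> < 2*\<delta> \<longrightarrow> \<bar>F x - F y\<bar> \<le> \<epsilon>" "\<epsilon> * Vt < e"
      using goodd by blast
    obtain N where N: "\<forall>n\<ge>N. (u - a) / real (Suc n) < \<delta>" using NN[OF d(1)] by blast
    have "dist (S m) (S n) < e" if "m \<ge> N" "n \<ge> N" for m n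
    proof -
      have "\<bar>rsum F G (unif a u m) (pts a u m) - S n\<bar> \<le> \<epsilon> * Vt"
        using C[OF d(1,2)] N that unif_partition[OF au] gfu by blast
      then show ?thesis using d(3) by (simp add: S_def dist_real_def)
    qed
    then show "\<exists>M. \<forall>m\<ge>M. \<forall>n\<ge>M. dist (S m) (S n) < e" by blast
  qed
  then obtain I where I: "S \<longlonglongrightarrow> I" using Cauchy_convergent_iff convergent_def by blast
  have Q: "\<bar>rsum F G xs \<tau> - I\<bar> \<le> \<epsilon> * Vt"
    if q1: "\<delta> > 0" and q2: "\<forall>x\<in>{a..u}. \<forall>y\<in>{a..u}. \<bar>x - y\<bar> < 2*\<delta> \<longrightarrow> \<bar>F x - F y\<bar> \<le> \<epsilon>"
      and q3: "partition_of a u xs" and q4: "gfine a u \<delta> xs \<tau>" for \<delta> \<epsilon> xs \<tau>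
  proof -
    obtain N where N: "\<forall>n\<ge>N. (u - a) / real (Suc n) < \<delta>" using NN[OF q1] by blast
    have lim: "(\<lambda>n. \<bar>rsum F G xs \<tau> - S n\<bar>) \<longlonglongrightarrow> \<bar>rsum F G xs \<tau> - I\<bar>"
      by (intro tendsto_intros I)
    show ?thesis
      by (rule LIMSEQ_le_const2[OF lim]) (use C[OF q1 q2 _ q3 q4] N in blast)
  qed
  have "has_rs_integral F G a u I"
    unfolding has_rs_integral_rsum
  proof (intro allI impI)
    fix e :: real assume "e > 0"
    then obtain \<delta> \<epsilon> where d: "\<delta> > 0" "\<forall>x\<in>{a..u}. \<forall>y\<in>{a..u}. \<bar>x - y\<bar> < 2*\<delta> \<longrightarrow> \<bar>F x - F y\<bar> \<le> \<epsilon>" "\<epsilon> * Vt < e"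
      using goodd by blast
    show "\<exists>d>0. \<forall>xs tag. partition_of a u xs \<and>
        (\<forall>j<length xs - 1. xs ! j \<le> tag j \<and> tag j \<le> xs ! Suc j \<and> xs ! Suc j - xs ! j < d)
        \<longrightarrow> \<bar>rsum F G xs tag - I\<bar> < e"
    proof (intro exI[of _ \<delta>] conjI allI impI)
      fix xs tag assume H: "partition_of a u xs \<and>
        (\<forall>j<length xs - 1. xs ! j \<le> tag j \<and> tag j \<le> xs ! Suc j \<and> xs ! Suc j - xs ! j < \<delta>)"
      have H1: "partition_of a u xs" using H by blast
      have "gfine a u \<delta> xs tag" using fine_imp_gfine[OF H1] H by blast
      then have "\<bar>rsum F G xs tag - I\<bar> \<le> \<epsilon> * Vt" using Q[OF d(1,2) H1] by blast
      then show "\<bar>rsum F G xs tag - I\<bar> < e" using d(3) by linarith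
    qed (use d in auto)
  qed
  show ?thesis
  proof (intro exI[of _ I] conjI allI impI)
    show "has_rs_integral F G a u I" by fact
    fix \<delta> \<epsilon> xs \<tau>
    assume A1: "\<delta> > 0" and A2: "\<forall>x\<in>{a..u}. \<forall>y\<in>{a..u}. \<bar>x - y\<bar> < 2*\<delta> \<longrightarrow> \<bar>F x - F y\<bar> \<le> \<epsilon>"
      and A3: "partition_of a u xs" and A4: "gfine a u \<delta> xs \<tau>"
    show "\<bar>rsum F G xs \<tau> - I\<bar> \<le> \<epsilon> * (V u - V a)" using Q[OF A1 A2 A3 A4] unfolding Vt_def .
  qed
qed

lemma rs_exists:
  assumes au: "a \<le> u" and cF: "continuous_on {a..u} F"
    and inc: "\<forall>x y. a \<le> x \<longrightarrow> x \<le> y \<longrightarrow> y \<le> u \<longrightarrow> \<bar>G y - G x\<bar> \<le> V y - V x"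
  shows "has_rs_integral F G a u (rs_integral F G a u) \<and> (\<forall>\<delta> \<epsilon>. \<delta> > 0 \<longrightarrow>
      (\<forall>x\<in>{a..u}. \<forall>y\<in>{a..u}. \<bar>x - y\<bar> < 2*\<delta> \<longrightarrow> \<bar>F x - F y\<bar> \<le> \<epsilon>) \<longrightarrow>
      (\<forall>xs \<tau>. partition_of a u xs \<longrightarrow> gfine a u \<delta> xs \<tau> \<longrightarrow> \<bar>rsum F G xs \<tau> - rs_integral F G a u\<bar> \<le> \<epsilon> * (V u - V a)))"
proof (cases "a = u")
  case True
  have "has_rs_integral F G a u 0"
    unfolding has_rs_integral_rsum True
  proof (intro allI impI exI[of _ 1] conjI)
    fix e :: real and xs tag assume "e > 0" "partition_of u u xs \<and> (\<forall>j<length xs - 1. xs ! j \<le> tag j \<and> tag j \<le> xs ! Suc j \<and> xs ! Suc j - xs ! j < 1)"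
    then have "xs = [u]" using partition_single by blast
    then show "\<bar>rsum F G xs tag - 0\<bar> < e" using \<open>e > 0\<close> by simp
  qed simp
  then have r0: "rs_integral F G a u = 0" using rs_integral_eq au by blast
  show ?thesis
  proof (intro conjI allI impI)
    show "has_rs_integral F G a u (rs_integral F G a u)" using r0 \<open>has_rs_integral F G a u 0\<close> by simp
    fix \<delta> \<epsilon> xs \<tau> assume "partition_of a u xs"
    then have "xs = [u]" using partition_single True by blast
    then show "\<bar>rsum F G xs \<tau> - rs_integral F G a u\<bar> \<le> \<epsilon> * (V u - V a)" using r0 True by simp
  qed
next
  case False
  then obtain I where "has_rs_integral F G a u I \<and> (\<forall>\<delta> \<epsilon>. \<delta> > 0 \<longrightarrow>
      (\<forall>x\<in>{a..u}. \<forall>y\<in>{a..u}. \<bar>x - y\<bar> < 2*\<delta> \<longrightarrow> \<bar>F x - F y\<bar> \<le> \<epsilon>) \<longrightarrow>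
      (\<forall>xs \<tau>. partition_of a u xs \<longrightarrow> gfine a u \<delta> xs \<tau> \<longrightarrow> \<bar>rsum F G xs \<tau> - I\<bar> \<le> \<epsilon> * (V u - V a)))"
    using rs_exists_pos[OF _ cF inc] au by (meson order_le_less)
  moreover have "rs_integral F G a u = I" using rs_integral_eq[OF au] calculation by blast
  ultimately show ?thesis by simp
qed




lemma abs3: "\<bar>x + y + z\<bar> \<le> \<bar>x\<bar> + \<bar>y\<bar> + \<bar>z::real\<bar>"
  by (rule order_trans[OF abs_triangle_ineq add_right_mono[OF abs_triangle_ineq]])

lemma rsum_append:
  assumes "xs \<noteq> []"
  shows "rsum f g (xs @ [y]) \<tau> = rsum f g xs \<tau> + f (\<tau> (length xs - 1)) * (g y - g (last xs))"
proof -
  obtain m where m: "length xs = Suc m" using assms by (cases xs) auto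
  have "rsum f g (xs @ [y]) \<tau> = (\<Sum>j<Suc m. f (\<tau> j) * (g ((xs @ [y]) ! Suc j) - g ((xs @ [y]) ! j)))"
    unfolding rsum_def using m by simp
  also have "\<dots> = (\<Sum>j<m. f (\<tau> j) * (g ((xs @ [y]) ! Suc j) - g ((xs @ [y]) ! j)))
       + f (\<tau> m) * (g y - g (xs ! m))" using m by (simp add: nth_append)
  also have "(\<Sum>j<m. f (\<tau> j) * (g ((xs @ [y]) ! Suc j) - g ((xs @ [y]) ! j))) = rsum f g xs \<tau>"
    unfolding rsum_def using m by (intro sum.cong) (auto simp: nth_append)
  finally show ?thesis using m assms by (simp add: last_conv_nth)
qed

lemma partition_append:
  assumes "partition_of a x xs" "x < y"
  shows "partition_of a y (xs @ [y])"
proof -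
  have "\<forall>z\<in>set xs. z < y"
    using partition_nth_bounds[OF assms(1)] assms(2) by (auto simp: in_set_conv_nth) (smt (verit))
  then show ?thesis using assms(1) by (auto simp: partition_of_def sorted_wrt_append)
qed

lemma rs_scale:
  assumes I: "has_rs_integral F G a u I"
    and F': "\<forall>x\<in>{a..u}. F' x = k * F x" and G': "\<forall>x\<in>{a..u}. G' x = c * G x"
  shows "has_rs_integral F' G' a u (k * c * I)"
  unfolding has_rs_integral_rsum
proof (intro allI impI)
  fix e :: real assume e: "e > 0"
  define e' where "e' = e / (\<bar>k * c\<bar> + 1)"
  have e': "e' > 0" using e by (simp add: e'_def add_pos_nonneg)
  obtain d where d: "d > 0" "\<forall>xs tag. partition_of a u xs \<and>
        (\<forall>j<length xs - 1. xs ! j \<le> tag j \<and> tag j \<le> xs ! Suc j \<and> xs ! Suc j - xs ! j < d)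
        \<longrightarrow> \<bar>rsum F G xs tag - I\<bar> < e'" using I e' unfolding has_rs_integral_rsum by blast
  show "\<exists>d>0. \<forall>xs tag. partition_of a u xs \<and>
        (\<forall>j<length xs - 1. xs ! j \<le> tag j \<and> tag j \<le> xs ! Suc j \<and> xs ! Suc j - xs ! j < d)
        \<longrightarrow> \<bar>rsum F' G' xs tag - k * c * I\<bar> < e"
  proof (intro exI[of _ d] conjI allI impI)
    fix xs tag assume H: "partition_of a u xs \<and>
        (\<forall>j<length xs - 1. xs ! j \<le> tag j \<and> tag j \<le> xs ! Suc j \<and> xs ! Suc j - xs ! j < d)"
    have P: "partition_of a u xs" using H by blast
    have eq: "rsum F' G' xs tag = k * c * rsum F G xs tag"
      unfolding rsum_def sum_distrib_left
    proof (intro sum.cong refl)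
      fix j assume j: "j \<in> {..<length xs - 1}"
      have b1: "a \<le> xs!j" "xs ! Suc j \<le> u" "a \<le> xs ! Suc j" "xs ! j \<le> u"
        using partition_nth_bounds[OF P, of j] partition_nth_bounds[OF P, of "Suc j"] j by auto
      have "tag j \<in> {a..u}" using H j b1 by force
      then show "F' (tag j) * (G' (xs ! Suc j) - G' (xs ! j)) = k * c * (F (tag j) * (G (xs ! Suc j) - G (xs ! j)))"
        using F' G' b1 by (simp add: algebra_simps)
    qed
    have r: "\<bar>rsum F G xs tag - I\<bar> < e'" using d(2) H by blast
    have "\<bar>rsum F' G' xs tag - k * c * I\<bar> = \<bar>k * c\<bar> * \<bar>rsum F G xs tag - I\<bar>"
      unfolding eq by (simp add: abs_mult[symmetric] algebra_simps)
    also have "\<dots> \<le> \<bar>k * c\<bar> * e'" using r by (intro mult_left_mono) auto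
    also have "\<dots> < e" unfolding e'_def using e by (simp add: field_simps)
    finally show "\<bar>rsum F' G' xs tag - k * c * I\<bar> < e" .
  qed (use d in auto)
qed

lemma power_step_ineq:
  fixes x y :: real
  assumes "0 \<le> x" "x \<le> y"
  shows "x ^ n / fact n * (y - x) \<le> (y ^ Suc n - x ^ Suc n) / fact (Suc n)"
proof -
  have s: "y ^ Suc n - x ^ Suc n = (y - x) * (\<Sum>i<Suc n. x ^ (Suc n - Suc i) * y ^ i)"
    by (rule power_diff_sumr2)
  have "(\<Sum>i<Suc n. x ^ n) \<le> (\<Sum>i<Suc n. x ^ (Suc n - Suc i) * y ^ i)"
  proof (intro sum_mono)
    fix i assume i: "i \<in> {..<Suc n}"
    have "x ^ n = x ^ (Suc n - Suc i) * x ^ i" using i by (simp add: power_add[symmetric])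
    also have "\<dots> \<le> x ^ (Suc n - Suc i) * y ^ i"
      using assms by (intro mult_left_mono power_mono) auto
    finally show "x ^ n \<le> x ^ (Suc n - Suc i) * y ^ i" .
  qed
  then have "real (Suc n) * x ^ n \<le> (\<Sum>i<Suc n. x ^ (Suc n - Suc i) * y ^ i)" by simp
  then have "real (Suc n) * x ^ n * (y - x) \<le> y ^ Suc n - x ^ Suc n"
    unfolding s using assms by (simp add: mult.commute mult_left_mono)
  then have "x ^ n * (y - x) \<le> (y ^ Suc n - x ^ Suc n) / real (Suc n)"
    by (simp add: field_simps)
  then have "x ^ n * (y - x) / fact n \<le> (y ^ Suc n - x ^ Suc n) / real (Suc n) / fact n"
    by (intro divide_right_mono) auto
  also have "\<dots> = (y ^ Suc n - x ^ Suc n) / fact (Suc n)"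
    by (simp add: fact_Suc divide_divide_eq_left)
  finally show ?thesis by simp
qed

lemma rs_bound:
  assumes au: "a \<le> u" and I: "has_rs_integral F G a u I"
    and Fb: "\<forall>x\<in>{a..u}. \<bar>F x\<bar> \<le> V x ^ n / fact n" and V0: "\<forall>x\<in>{a..u}. 0 \<le> V x"
    and inc: "\<forall>x y. a \<le> x \<longrightarrow> x \<le> y \<longrightarrow> y \<le> u \<longrightarrow> \<bar>G y - G x\<bar> \<le> V y - V x"
  shows "\<bar>I\<bar> \<le> V u ^ Suc n / fact (Suc n)"
proof (rule field_le_epsilon)
  fix e :: real assume e: "e > 0"
  obtain d where d: "d > 0" "\<forall>xs tag. partition_of a u xs \<and>
        (\<forall>j<length xs - 1. xs ! j \<le> tag j \<and> tag j \<le> xs ! Suc j \<and> xs ! Suc j - xs ! j < d)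
        \<longrightarrow> \<bar>rsum F G xs tag - I\<bar> < e" using I e unfolding has_rs_integral_rsum by blast
  obtain xs where xs: "partition_of a u xs" "\<forall>j<length xs - 1. xs ! Suc j - xs ! j < d"
    using exists_fine[OF au d(1)] by blast
  have fine: "\<forall>j<length xs - 1. xs ! j \<le> xs ! j \<and> xs ! j \<le> xs ! Suc j \<and> xs ! Suc j - xs ! j < d"
    using xs(2) partition_mono[OF xs(1)] by (auto simp: less_imp_le)
  have close: "\<bar>rsum F G xs (\<lambda>j. xs ! j) - I\<bar> < e" using d(2) xs(1) fine by blast
  define m where "m = length xs - 1"
  have lm: "length xs = Suc m" using xs(1) unfolding m_def partition_of_def by (cases xs) auto
  have bnd: "a \<le> xs ! j \<and> xs ! j \<le> u" if "j \<le> m" for j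
    using partition_nth_bounds[OF xs(1), of j] that lm by auto
  have "\<bar>rsum F G xs (\<lambda>j. xs ! j)\<bar> \<le> (\<Sum>j<m. \<bar>F (xs ! j) * (G (xs ! Suc j) - G (xs ! j))\<bar>)"
    unfolding rsum_def m_def by (rule sum_abs)
  also have "\<dots> \<le> (\<Sum>j<m. (V (xs ! Suc j) ^ Suc n - V (xs ! j) ^ Suc n) / fact (Suc n))"
  proof (intro sum_mono)
    fix j assume j: "j \<in> {..<m}"
    have b: "a \<le> xs ! j" "xs ! j \<le> u" "a \<le> xs ! Suc j" "xs ! Suc j \<le> u" using bnd[of j] bnd[of "Suc j"] j by auto
    have le: "xs ! j \<le> xs ! Suc j" using partition_mono[OF xs(1), of j] j lm by auto
    have g: "\<bar>G (xs ! Suc j) - G (xs ! j)\<bar> \<le> V (xs ! Suc j) - V (xs ! j)" using inc b le by blast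
    have "\<bar>F (xs ! j) * (G (xs ! Suc j) - G (xs ! j))\<bar> \<le> V (xs ! j) ^ n / fact n * (V (xs ! Suc j) - V (xs ! j))"
      unfolding abs_mult using Fb b g V0 by (intro mult_mono) auto
    also have "\<dots> \<le> (V (xs ! Suc j) ^ Suc n - V (xs ! j) ^ Suc n) / fact (Suc n)"
      using V0 b g by (intro power_step_ineq) auto
    finally show "\<bar>F (xs ! j) * (G (xs ! Suc j) - G (xs ! j))\<bar> \<le> (V (xs ! Suc j) ^ Suc n - V (xs ! j) ^ Suc n) / fact (Suc n)" .
  qed
  also have "\<dots> = (V (xs ! m) ^ Suc n - V (xs ! 0) ^ Suc n) / fact (Suc n)"
  proof -
    have t: "(\<Sum>j<m. V (xs ! Suc j) ^ Suc n - V (xs ! j) ^ Suc n) = V (xs ! m) ^ Suc n - V (xs ! 0) ^ Suc n"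
      by (rule sum_lessThan_telescope)
    show ?thesis unfolding sum_divide_distrib[symmetric] t ..
  qed
  also have "\<dots> \<le> V u ^ Suc n / fact (Suc n)"
  proof -
    have "xs ! m = u" "xs ! 0 = a" using xs(1) lm unfolding partition_of_def
      by (auto simp: last_conv_nth hd_conv_nth)
    moreover have "0 \<le> V a ^ Suc n" using V0 au by auto
    ultimately show ?thesis by (simp add: divide_right_mono)
  qed
  finally have r: "\<bar>rsum F G xs (\<lambda>j. xs ! j)\<bar> \<le> V u ^ Suc n / fact (Suc n)" .
  have "\<bar>I\<bar> \<le> \<bar>rsum F G xs (\<lambda>j. xs ! j)\<bar> + \<bar>rsum F G xs (\<lambda>j. xs ! j) - I\<bar>"
    using abs_triangle_ineq2[of "rsum F G xs (\<lambda>j. xs ! j)" I] by (simp add: abs_minus_commute)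
  also have "\<dots> \<le> V u ^ Suc n / fact (Suc n) + e" using r close by (intro add_mono) auto
  finally show "\<bar>I\<bar> \<le> V u ^ Suc n / fact (Suc n) + e" .
qed




lemma rs_cont_step:
  assumes ab: "a \<le> b" and cF: "continuous_on {a..b} F"
    and inc: "\<forall>x y. a \<le> x \<longrightarrow> x \<le> y \<longrightarrow> y \<le> b \<longrightarrow> \<bar>G y - G x\<bar> \<le> V y - V x"
    and dpos: "\<delta> > 0" and md: "\<forall>x\<in>{a..b}. \<forall>y\<in>{a..b}. \<bar>x - y\<bar> < 2*\<delta> \<longrightarrow> \<bar>F x - F y\<bar> \<le> \<epsilon>"
    and M: "\<forall>x\<in>{a..b}. \<bar>F x\<bar> \<le> M"
    and u: "a \<le> u1" "u1 \<le> u2" "u2 \<le> b" "u2 - u1 < \<delta>"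
  shows "\<bar>rs_integral F G a u2 - rs_integral F G a u1\<bar> \<le> 2 * \<epsilon> * (V b - V a) + M * \<bar>G u2 - G u1\<bar>"
proof -
  have eps: "0 \<le> \<epsilon>" using md[rule_format, of a a] ab dpos by simp
  have M0: "0 \<le> M" using M ab by (meson abs_ge_zero atLeastAtMost_iff order.trans order_refl)
  have Vt: "0 \<le> V b - V a" using inc ab by (meson abs_ge_zero order.trans order_refl)
  have Vu: "V u1 \<le> V b" "V u2 \<le> V b" using inc u ab
    by (meson abs_ge_zero diff_ge_0_iff_ge order.trans order_refl)+
  have sub: "{a..u1} \<subseteq> {a..b}" "{a..u2} \<subseteq> {a..b}" using u by auto
  have Q: "\<bar>rsum F G xs \<tau> - rs_integral F G a ui\<bar> \<le> \<epsilon> * (V ui - V a)"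
    if "a \<le> ui" "ui \<le> b" "partition_of a ui xs" "gfine a ui \<delta> xs \<tau>" for ui xs \<tau>
  proof -
    have c: "continuous_on {a..ui} F" using continuous_on_subset[OF cF] that(2) by auto
    have i: "\<forall>x y. a \<le> x \<longrightarrow> x \<le> y \<longrightarrow> y \<le> ui \<longrightarrow> \<bar>G y - G x\<bar> \<le> V y - V x" using inc that(2) by auto
    have m: "\<forall>x\<in>{a..ui}. \<forall>y\<in>{a..ui}. \<bar>x - y\<bar> < 2*\<delta> \<longrightarrow> \<bar>F x - F y\<bar> \<le> \<epsilon>" using md that(2) by auto
    show ?thesis using rs_exists[OF that(1) c i] dpos m that(3,4) by blast
  qed
  show ?thesis
  proof (cases "u1 = u2")
    case True
    then show ?thesis using eps Vt M0 by simp
  next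
    case False
    then have lt: "u1 < u2" using u by simp
    obtain xs where xs: "partition_of a u1 xs" "\<forall>j<length xs - 1. xs ! Suc j - xs ! j < \<delta>"
      using exists_fine[OF u(1) dpos] by blast
    have ne: "xs \<noteq> []" using xs(1) by (simp add: partition_of_def)
    have lx: "last xs = u1" using xs(1) by (simp add: partition_of_def)
    define ys where "ys = xs @ [u2]"
    define \<tau> where "\<tau> j = ys ! j" for j
    have pys: "partition_of a u2 ys" unfolding ys_def by (rule partition_append[OF xs(1) lt])
    have fx: "\<forall>j<length xs - 1. xs ! j \<le> \<tau> j \<and> \<tau> j \<le> xs ! Suc j \<and> xs ! Suc j - xs ! j < \<delta>"
      using xs(2) partition_mono[OF xs(1)] by (auto simp: \<tau>_def ys_def nth_append less_imp_le)
    have fy: "\<forall>j<length ys - 1. ys ! j \<le> \<tau> j \<and> \<tau> j \<le> ys ! Suc j \<and> ys ! Suc j - ys ! j < \<delta>"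
    proof (intro allI impI)
      fix j assume j: "j < length ys - 1"
      show "ys ! j \<le> \<tau> j \<and> \<tau> j \<le> ys ! Suc j \<and> ys ! Suc j - ys ! j < \<delta>"
      proof (cases "j < length xs - 1")
        case True
        then show ?thesis using fx by (auto simp: \<tau>_def ys_def nth_append)
      next
        case False
        then have "j = length xs - 1" using j by (simp add: ys_def)
        moreover have "xs ! (length xs - 1) = u1" using lx ne by (simp add: last_conv_nth)
        ultimately show ?thesis using ne u lt
          by (auto simp: \<tau>_def ys_def nth_append)
      qed
    qed
    have g1: "gfine a u1 \<delta> xs \<tau>" by (rule fine_imp_gfine[OF xs(1) fx]) auto
    have g2: "gfine a u2 \<delta> ys \<tau>" by (rule fine_imp_gfine[OF pys fy]) auto
    have q1: "\<bar>rsum F G xs \<tau> - rs_integral F G a u1\<bar> \<le> \<epsilon> * (V b - V a)"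
      using Q[OF u(1) _ xs(1) g1] u Vu eps by (meson mult_left_mono diff_right_mono order.trans)
    have q2: "\<bar>rsum F G ys \<tau> - rs_integral F G a u2\<bar> \<le> \<epsilon> * (V b - V a)"
      using Q[OF _ u(3) pys g2] u Vu eps by (meson mult_left_mono diff_right_mono order.trans)
    have t: "\<tau> (length xs - 1) = u1" using lx ne by (simp add: \<tau>_def ys_def nth_append last_conv_nth)
    have ry: "rsum F G ys \<tau> - rsum F G xs \<tau> = F u1 * (G u2 - G u1)"
      unfolding ys_def using rsum_append[OF ne] t lx by simp
    have fm: "\<bar>F u1 * (G u2 - G u1)\<bar> \<le> M * \<bar>G u2 - G u1\<bar>"
      unfolding abs_mult using M u by (intro mult_right_mono) auto
    have "rs_integral F G a u2 - rs_integral F G a u1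
        = (rs_integral F G a u2 - rsum F G ys \<tau>) + (rsum F G ys \<tau> - rsum F G xs \<tau>) + (rsum F G xs \<tau> - rs_integral F G a u1)"
      by simp
    then have "\<bar>rs_integral F G a u2 - rs_integral F G a u1\<bar>
       \<le> \<bar>rs_integral F G a u2 - rsum F G ys \<tau>\<bar> + \<bar>rsum F G ys \<tau> - rsum F G xs \<tau>\<bar> + \<bar>rsum F G xs \<tau> - rs_integral F G a u1\<bar>"
      using abs3 by metis
    also have "\<dots> \<le> \<epsilon> * (V b - V a) + M * \<bar>G u2 - G u1\<bar> + \<epsilon> * (V b - V a)"
      using q1 q2 fm ry by (intro add_mono) (auto simp: abs_minus_commute)
    finally show ?thesis by simp
  qed
qed




lemma rs_cont:
  assumes ab: "a \<le> b" and cF: "continuous_on {a..b} F" and cG: "continuous_on {a..b} G"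
    and inc: "\<forall>x y. a \<le> x \<longrightarrow> x \<le> y \<longrightarrow> y \<le> b \<longrightarrow> \<bar>G y - G x\<bar> \<le> V y - V x"
  shows "continuous_on {a..b} (\<lambda>u. rs_integral F G a u)"
  unfolding continuous_on_iff
proof (intro ballI allI impI)
  fix u0 e :: real assume u0: "u0 \<in> {a..b}" and e: "0 < e"
  obtain M0 where M0: "\<forall>x\<in>F ` {a..b}. norm x \<le> M0"
    using compact_imp_bounded[OF compact_continuous_image[OF cF compact_Icc]] unfolding bounded_iff by blast
  define M where "M = \<bar>M0\<bar>"
  have M: "\<forall>x\<in>{a..b}. \<bar>F x\<bar> \<le> M"
  proof
    fix x assume "x \<in> {a..b}"
    then have "norm (F x) \<le> M0" using M0 by blast
    then show "\<bar>F x\<bar> \<le> M" unfolding M_def by simp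
  qed
  have Mpos: "0 \<le> M" unfolding M_def by simp
  define Vt where "Vt = V b - V a"
  have Vt: "0 \<le> Vt" using inc ab unfolding Vt_def by (meson abs_ge_zero order.trans order_refl)
  define \<epsilon> where "\<epsilon> = e / (4 * (Vt + 1))"
  have \<epsilon>: "\<epsilon> > 0" using e Vt unfolding \<epsilon>_def by simp
  obtain \<delta> where \<delta>: "\<delta> > 0" "\<forall>x\<in>{a..b}. \<forall>y\<in>{a..b}. \<bar>x - y\<bar> < 2*\<delta> \<longrightarrow> \<bar>F x - F y\<bar> \<le> \<epsilon>"
    using mod_exists[OF cF \<epsilon>] by blast
  define \<eta> where "\<eta> = e / (4 * (M + 1))"
  have \<eta>: "\<eta> > 0" using e Mpos unfolding \<eta>_def by simp
  obtain d1 where d1: "d1 > 0" "\<forall>x\<in>{a..b}. dist x u0 < d1 \<longrightarrow> dist (G x) (G u0) < \<eta>"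
    using cG u0 \<eta> unfolding continuous_on_iff by blast
  have e1: "2 * \<epsilon> * Vt < e / 2"
  proof -
    have "2 * \<epsilon> * Vt = e / 2 * (Vt / (Vt + 1))" unfolding \<epsilon>_def using Vt by (simp add: field_simps)
    also have "\<dots> < e / 2 * 1" using e Vt by (intro mult_strict_left_mono) auto
    finally show ?thesis by simp
  qed
  have e2: "M * \<eta> < e / 2"
  proof -
    have "M * \<eta> = e / 4 * (M / (M + 1))" unfolding \<eta>_def using Mpos by (simp add: field_simps)
    also have "\<dots> \<le> e / 4 * 1" using e Mpos by (intro mult_left_mono) auto
    finally show ?thesis using e by simp
  qed
  have main: "\<bar>rs_integral F G a y - rs_integral F G a x\<bar> < e"
    if xy: "x \<le> y" "x \<in> {a..b}" "y \<in> {a..b}" "y - x < \<delta>" "\<bar>G y - G x\<bar> < \<eta>" for x y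
  proof -
    have "\<bar>rs_integral F G a y - rs_integral F G a x\<bar> \<le> 2 * \<epsilon> * Vt + M * \<bar>G y - G x\<bar>"
      unfolding Vt_def by (rule rs_cont_step[OF ab cF inc \<delta>(1,2) M]) (use xy in auto)
    also have "M * \<bar>G y - G x\<bar> \<le> M * \<eta>" using xy(5) Mpos by (intro mult_left_mono) auto
    finally show ?thesis using e1 e2 by linarith
  qed
  show "\<exists>d>0. \<forall>x'\<in>{a..b}. dist x' u0 < d \<longrightarrow> dist (rs_integral F G a x') (rs_integral F G a u0) < e"
  proof (intro exI[of _ "min \<delta> d1"] conjI ballI impI)
    show "0 < min \<delta> d1" using \<delta> d1 by simp
    fix u assume u: "u \<in> {a..b}" "dist u u0 < min \<delta> d1"
    have g: "\<bar>G u - G u0\<bar> < \<eta>" using d1(2) u by (auto simp: dist_real_def)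
    show "dist (rs_integral F G a u) (rs_integral F G a u0) < e"
    proof (cases "u \<le> u0")
      case True
      then show ?thesis using main[of u u0] u u0 g by (auto simp: dist_real_def abs_minus_commute)
    next
      case False
      then show ?thesis using main[of u0 u] u u0 g by (auto simp: dist_real_def abs_minus_commute)
    qed
  qed
qed

definition varf :: "(real \<Rightarrow> 'a::real_normed_vector) \<Rightarrow> real \<Rightarrow> real \<Rightarrow> real" where
  "varf \<gamma> a x = Sup {variation_sum \<gamma> xs | xs. partition_of a x xs}"

lemma variation_sum_append:
  assumes "xs \<noteq> []"
  shows "variation_sum \<gamma> (xs @ [y]) = variation_sum \<gamma> xs + norm (\<gamma> y - \<gamma> (last xs))"
proof -
  obtain m where m: "length xs = Suc m" using assms by (cases xs) auto
  have "variation_sum \<gamma> (xs @ [y]) = (\<Sum>j<Suc m. norm (\<gamma> ((xs @ [y]) ! Suc j) - \<gamma> ((xs @ [y]) ! j)))"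
    unfolding variation_sum_def using m by simp
  also have "\<dots> = (\<Sum>j<m. norm (\<gamma> ((xs @ [y]) ! Suc j) - \<gamma> ((xs @ [y]) ! j)))
       + norm (\<gamma> y - \<gamma> (xs ! m))" using m by (simp add: nth_append)
  also have "(\<Sum>j<m. norm (\<gamma> ((xs @ [y]) ! Suc j) - \<gamma> ((xs @ [y]) ! j))) = variation_sum \<gamma> xs"
    unfolding variation_sum_def using m by (intro sum.cong) (auto simp: nth_append)
  finally show ?thesis using m assms by (simp add: last_conv_nth)
qed

lemma variation_sum_nonneg: "0 \<le> variation_sum \<gamma> xs"
  unfolding variation_sum_def by (intro sum_nonneg) auto

lemma varf_bdd:
  assumes BV: "bounded_variation_on a b \<gamma>" and xb: "x \<le> b"
  shows "bdd_above {variation_sum \<gamma> xs | xs. partition_of a x xs}"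
proof -
  obtain B where B: "\<forall>xs. partition_of a b xs \<longrightarrow> variation_sum \<gamma> xs \<le> B"
    using BV unfolding bounded_variation_on_def by blast
  show ?thesis
  proof (rule bdd_aboveI[of _ B], clarify)
    fix xs assume p: "partition_of a x xs"
    show "variation_sum \<gamma> xs \<le> B"
    proof (cases "x = b")
      case True then show ?thesis using B p by blast
    next
      case False
      then have "x < b" using xb by simp
      have ne: "xs \<noteq> []" "last xs = x" using p by (auto simp: partition_of_def)
      have "variation_sum \<gamma> (xs @ [b]) \<le> B" using B partition_append[OF p \<open>x < b\<close>] by blast
      then show ?thesis using variation_sum_append[OF ne(1), of \<gamma> b] norm_ge_zero[of "\<gamma> b - \<gamma> (last xs)"] by linarith
    qed
  qed
qed

lemma varf_ne:
  assumes "a \<le> x"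
  shows "\<exists>xs. partition_of a x xs"
proof (cases "a = x")
  case True then show ?thesis by (intro exI[of _ "[a]"]) (simp add: partition_of_def)
next
  case False then show ?thesis using assms by (intro exI[of _ "[a, x]"]) (simp add: partition_of_def)
qed

lemma varf_nonneg:
  assumes BV: "bounded_variation_on a b \<gamma>" and "a \<le> x" "x \<le> b"
  shows "0 \<le> varf \<gamma> a x"
proof -
  obtain xs where xs: "partition_of a x xs" using varf_ne[OF assms(2)] by blast
  have "variation_sum \<gamma> xs \<le> varf \<gamma> a x"
    unfolding varf_def by (rule cSup_upper) (use xs varf_bdd[OF BV assms(3)] in auto)
  then show ?thesis using variation_sum_nonneg[of \<gamma> xs] by linarith
qed

lemma varf_inc:
  assumes BV: "bounded_variation_on a b \<gamma>" and xy: "a \<le> x" "x \<le> y" "y \<le> b"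
  shows "varf \<gamma> a x + norm (\<gamma> y - \<gamma> x) \<le> varf \<gamma> a y"
proof (cases "x = y")
  case True then show ?thesis by simp
next
  case False
  then have lt: "x < y" using xy by simp
  have "varf \<gamma> a x \<le> varf \<gamma> a y - norm (\<gamma> y - \<gamma> x)"
    unfolding varf_def[of \<gamma> a x]
  proof (rule cSup_least)
    show "{variation_sum \<gamma> xs |xs. partition_of a x xs} \<noteq> {}" using varf_ne[OF xy(1)] by blast
    fix z assume "z \<in> {variation_sum \<gamma> xs |xs. partition_of a x xs}"
    then obtain xs where xs: "partition_of a x xs" "z = variation_sum \<gamma> xs" by blast
    have ne: "xs \<noteq> []" "last xs = x" using xs(1) by (auto simp: partition_of_def)
    have "variation_sum \<gamma> (xs @ [y]) \<le> varf \<gamma> a y"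
      unfolding varf_def by (rule cSup_upper) (use partition_append[OF xs(1) lt] varf_bdd[OF BV xy(3)] in auto)
    then show "z \<le> varf \<gamma> a y - norm (\<gamma> y - \<gamma> x)"
      using variation_sum_append[OF ne(1), of \<gamma> y] ne(2) xs(2) by simp
  qed
  then show ?thesis by simp
qed

lemma sigrev_props:
  fixes \<gamma> :: "real \<Rightarrow> 'a::euclidean_space"
  assumes ab: "a \<le> b" and c\<gamma>: "continuous_on {a..b} \<gamma>" and BV: "bounded_variation_on a b \<gamma>"
  shows "set w \<subseteq> Basis \<Longrightarrow> continuous_on {a..b} (sig_rev \<gamma> a w)
    \<and> (\<forall>u\<in>{a..b}. \<bar>sig_rev \<gamma> a w u\<bar> \<le> varf \<gamma> a u ^ length w / fact (length w))
    \<and> (\<forall>c. \<forall>u\<in>{a..b}. sig_rev (rescale_path c \<gamma>) a w u = c ^ length w * sig_rev \<gamma> a w u)"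
proof (induction w)
  case Nil
  then show ?case by simp
next
  case (Cons i w)
  define V where "V = varf \<gamma> a"
  define F where "F = sig_rev \<gamma> a w"
  define G where "G = (\<lambda>x. \<gamma> x \<bullet> i)"
  have i: "i \<in> Basis" using Cons.prems by simp
  have IH: "continuous_on {a..b} F" "\<forall>u\<in>{a..b}. \<bar>F u\<bar> \<le> V u ^ length w / fact (length w)"
    "\<forall>c. \<forall>u\<in>{a..b}. sig_rev (rescale_path c \<gamma>) a w u = c ^ length w * F u"
    using Cons by (auto simp: F_def V_def)
  have inc: "\<forall>x y. a \<le> x \<longrightarrow> x \<le> y \<longrightarrow> y \<le> b \<longrightarrow> \<bar>G y - G x\<bar> \<le> V y - V x"
  proof (intro allI impI)
    fix x y assume xy: "a \<le> x" "x \<le> y" "y \<le> b"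
    have "\<bar>G y - G x\<bar> = \<bar>(\<gamma> y - \<gamma> x) \<bullet> i\<bar>" unfolding G_def by (simp add: inner_diff_left)
    also have "\<dots> \<le> norm (\<gamma> y - \<gamma> x)" using Basis_le_norm[OF i] .
    also have "\<dots> \<le> V y - V x" using varf_inc[OF BV xy] unfolding V_def by simp
    finally show "\<bar>G y - G x\<bar> \<le> V y - V x" .
  qed
  have cG: "continuous_on {a..b} G" unfolding G_def by (intro continuous_intros c\<gamma>)
  have V0: "\<forall>x\<in>{a..b}. 0 \<le> V x" using varf_nonneg[OF BV] unfolding V_def by auto
  have sr: "sig_rev \<gamma> a (i # w) = (\<lambda>u. rs_integral F G a u)"
    by (intro ext) (simp add: F_def G_def)
  have ex: "has_rs_integral F G a u (rs_integral F G a u)" if u: "u \<in> {a..b}" for u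
  proof -
    have c: "continuous_on {a..u} F" using continuous_on_subset[OF IH(1)] u by auto
    have i': "\<forall>x y. a \<le> x \<longrightarrow> x \<le> y \<longrightarrow> y \<le> u \<longrightarrow> \<bar>G y - G x\<bar> \<le> V y - V x" using inc u by auto
    show ?thesis using rs_exists[OF _ c i'] u by auto
  qed
  have P1: "continuous_on {a..b} (sig_rev \<gamma> a (i # w))"
    unfolding sr by (rule rs_cont[OF ab IH(1) cG inc])
  have P2: "\<bar>sig_rev \<gamma> a (i # w) u\<bar> \<le> varf \<gamma> a u ^ length (i # w) / fact (length (i # w))"
    if u: "u \<in> {a..b}" for u
  proof -
    have "\<bar>rs_integral F G a u\<bar> \<le> V u ^ Suc (length w) / fact (Suc (length w))"
      by (rule rs_bound[OF _ ex[OF u]]) (use u IH(2) V0 inc in auto)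
    then show ?thesis using sr V_def by simp
  qed
  have P3: "sig_rev (rescale_path c \<gamma>) a (i # w) u = c ^ length (i # w) * sig_rev \<gamma> a (i # w) u"
    if u: "u \<in> {a..b}" for c u
  proof -
    have h: "has_rs_integral (sig_rev (rescale_path c \<gamma>) a w) (\<lambda>x. rescale_path c \<gamma> x \<bullet> i) a u
        (c ^ length w * c * rs_integral F G a u)"
      by (rule rs_scale[OF ex[OF u]]) (use IH(3) u in \<open>auto simp: G_def rescale_path_def\<close>)
    have "sig_rev (rescale_path c \<gamma>) a (i # w) u
        = rs_integral (sig_rev (rescale_path c \<gamma>) a w) (\<lambda>x. rescale_path c \<gamma> x \<bullet> i) a u"
      by simp
    also have "\<dots> = c ^ length w * c * rs_integral F G a u"
      by (rule rs_integral_eq[OF _ h]) (use u in auto)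
    finally show ?thesis using sr by simp
  qed
  show ?case using P1 P2 P3 by blast
qed




lemma moment_from_has_integral:
  fixes h :: "real \<Rightarrow> real"
  assumes m: "h \<in> borel_measurable borel" and nn: "\<And>x. 0 \<le> h x" and hi: "(h has_integral I) UNIV"
  shows "integrable lborel h \<and> integral\<^sup>L lborel h = I"
proof -
  have I0: "0 \<le> I" using has_integral_nonneg[OF hi] nn by auto
  have "integral\<^sup>N lborel (\<lambda>x. indicator UNIV x * h x) = ennreal I"
    by (rule nn_integral_has_integral_lebesgue[OF _ hi]) (use nn in auto)
  then have "(\<integral>\<^sup>+x. ennreal (h x) \<partial>lborel) = ennreal I" by simp
  then show ?thesis using nn_integral_eq_integrable[of h lborel I] m nn I0 by auto
qed

lemma exp_moment:
  "integrable (density lborel (exponential_density 1)) (\<lambda>p. sqrt p ^ k) \<and>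
   (\<integral>p. sqrt p ^ k \<partial>density lborel (exponential_density 1)) = Gamma (real k / 2 + 1)"
proof -
  define h where "h = (\<lambda>p::real. exponential_density 1 p * sqrt p ^ k)"
  have g: "((\<lambda>t. t powr (real k / 2 + 1 - 1) / exp t) has_integral Gamma (real k / 2 + 1)) {0..}"
    by (rule Gamma_integral_real) (simp add: add_nonneg_pos)
  then have g': "((\<lambda>x. if x \<in> {0..} then x powr (real k / 2 + 1 - 1) / exp x else 0) has_integral Gamma (real k / 2 + 1)) UNIV"
    by (subst has_integral_restrict_UNIV)
  have hi: "(h has_integral Gamma (real k / 2 + 1)) UNIV"
  proof (rule has_integral_spike[OF negligible_sing[of 0] _ g'])
    fix x :: real assume x: "x \<in> UNIV - {0}"
    show "h x = (if x \<in> {0..} then x powr (real k / 2 + 1 - 1) / exp x else 0)"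
    proof (cases "x < 0")
      case True then show ?thesis by (simp add: h_def exponential_density_def)
    next
      case False
      then have xp: "x > 0" using x by auto
      have "sqrt x ^ k = (x powr (1/2)) ^ k" using xp by (simp add: powr_half_sqrt)
      also have "\<dots> = (x powr (1/2)) powr (real k)" using xp by (simp add: powr_realpow)
      also have "\<dots> = x powr (real k / 2)" by (simp add: powr_powr)
      finally show ?thesis using xp by (simp add: h_def exponential_density_def exp_minus field_simps)
    qed
  qed
  have hm: "h \<in> borel_measurable borel" unfolding h_def exponential_density_def by measurable
  have hn: "0 \<le> h x" for x
    by (cases "x < 0") (auto simp: h_def exponential_density_def)
  have mom: "integrable lborel h \<and> integral\<^sup>L lborel h = Gamma (real k / 2 + 1)"
    by (rule moment_from_has_integral[OF hm hn hi])
  have dm: "exponential_density 1 \<in> borel_measurable lborel" unfolding exponential_density_def by measurable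
  have dn: "AE x in lborel. 0 \<le> exponential_density 1 x" by (auto simp: exponential_density_def)
  have fm: "(\<lambda>p. sqrt p ^ k) \<in> borel_measurable lborel" by measurable
  have "integrable (density lborel (exponential_density 1)) (\<lambda>p. sqrt p ^ k)"
    using integrable_density[OF fm dm dn] mom by (simp add: h_def)
  moreover have "(\<integral>p. sqrt p ^ k \<partial>density lborel (exponential_density 1)) = Gamma (real k / 2 + 1)"
    using integral_density[OF fm dm dn] mom by (simp add: h_def)
  ultimately show ?thesis by simp
qed

lemma Beta_pos: "0 < a \<Longrightarrow> 0 < b \<Longrightarrow> 0 < Beta a (b::real)"
  by (simp add: Beta_def)

lemma beta_moment:
  assumes m: "m > 0"
  shows "integrable (density lborel (beta_density 1 m)) (\<lambda>p. p ^ k) \<and>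
   (\<integral>p. p ^ k \<partial>density lborel (beta_density 1 m)) = Beta (real k + 1) m / Beta 1 m"
proof -
  define B where "B = Beta 1 m"
  have B: "B > 0" unfolding B_def using m by (simp add: Beta_pos)
  define h where "h = (\<lambda>p::real. beta_density 1 m p * p ^ k)"
  have g: "((\<lambda>t. t powr (real k + 1 - 1) * (1 - t) powr (m - 1)) has_integral Beta (real k + 1) m) {0<..<1}"
    using has_integral_Beta_real[of "real k + 1" m] m by (simp add: has_integral_Icc_iff_Ioo add_nonneg_pos)
  then have g': "((\<lambda>x. if x \<in> {0<..<1} then x powr (real k + 1 - 1) * (1 - x) powr (m - 1) else 0) has_integral Beta (real k + 1) m) UNIV"
    by (subst has_integral_restrict_UNIV)
  have g'': "((\<lambda>x. (1 / B) * (if x \<in> {0<..<1} then x powr (real k + 1 - 1) * (1 - x) powr (m - 1) else 0))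
       has_integral (1 / B) * Beta (real k + 1) m) UNIV"
    by (rule has_integral_mult_right[OF g'])
  have hi0: "(h has_integral (1 / B) * Beta (real k + 1) m) UNIV"
  proof (rule has_integral_spike[OF negligible_empty _ g''])
    fix x :: real assume "x \<in> UNIV - {}"
    show "h x = (1 / B) * (if x \<in> {0<..<1} then x powr (real k + 1 - 1) * (1 - x) powr (m - 1) else 0)"
      by (cases "0 < x \<and> x < 1") (auto simp: h_def beta_density_def B_def powr_realpow)
  qed
  then have hi: "(h has_integral Beta (real k + 1) m / B) UNIV" by simp
  have hm: "h \<in> borel_measurable borel" unfolding h_def beta_density_def by measurable
  have hn: "0 \<le> h x" for x
    using B by (cases "0 < x \<and> x < 1") (auto simp: h_def beta_density_def B_def)
  have mom: "integrable lborel h \<and> integral\<^sup>L lborel h = Beta (real k + 1) m / B"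
    by (rule moment_from_has_integral[OF hm hn hi])
  have dm: "beta_density 1 m \<in> borel_measurable lborel" unfolding beta_density_def by measurable
  have dn: "AE x in lborel. 0 \<le> beta_density 1 m x"
    using B by (auto simp: beta_density_def B_def)
  have fm: "(\<lambda>p::real. p ^ k) \<in> borel_measurable lborel" by measurable
  have "integrable (density lborel (beta_density 1 m)) (\<lambda>p. p ^ k)"
    using integrable_density[OF fm dm dn] mom by (simp add: h_def)
  moreover have "(\<integral>p. p ^ k \<partial>density lborel (beta_density 1 m)) = Beta (real k + 1) m / B"
    using integral_density[OF fm dm dn] mom by (simp add: h_def)
  ultimately show ?thesis by (simp add: B_def)
qed




lemma exchange:
  fixes \<mu> :: "real measure" and f :: "real \<Rightarrow> real" and T :: "nat \<Rightarrow> real"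
  assumes meas[measurable]: "f \<in> borel_measurable \<mu>"
    and int: "\<And>k. integrable \<mu> (\<lambda>p. f p ^ k)"
    and mom: "\<And>k. (\<integral>p. f p ^ k \<partial>\<mu>) = mom k"
    and nn: "AE p in \<mu>. 0 \<le> f p"
    and momb: "\<And>k. mom k \<le> fact k"
    and C: "0 \<le> C" and Tb: "\<And>k. \<bar>T k\<bar> \<le> C ^ k / (fact k)^2"
  shows "(\<integral>p. (\<Sum>k. f p ^ k * T k) \<partial>\<mu>) = (\<Sum>k. mom k * T k)"
proof -
  have fk: "C ^ k / (fact k)^2 \<le> C ^ k / fact k" for k
  proof -
    have "(fact k :: real) \<le> (fact k)^2" by (simp add: power2_eq_square fact_ge_1)
    then show ?thesis using C by (intro divide_left_mono) auto
  qed
  have i: "integrable \<mu> (\<lambda>p. f p ^ k * T k)" for k using int by simp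
  have s1: "AE p in \<mu>. summable (\<lambda>k. norm (f p ^ k * T k))"
  proof (intro AE_I2)
    fix p
    have "summable (\<lambda>k. inverse (fact k) * (\<bar>f p\<bar> * C) ^ k)" by (rule summable_exp)
    then show "summable (\<lambda>k. norm (f p ^ k * T k))"
    proof (rule summable_comparison_test'[where N=0])
      fix k :: nat
      have "norm (norm (f p ^ k * T k)) = \<bar>f p\<bar> ^ k * \<bar>T k\<bar>" by (simp add: abs_mult power_abs)
      also have "\<dots> \<le> \<bar>f p\<bar> ^ k * (C ^ k / fact k)"
        using Tb[of k] fk[of k] by (intro mult_left_mono) auto
      also have "\<dots> = inverse (fact k) * (\<bar>f p\<bar> * C) ^ k" by (simp add: power_mult_distrib field_simps)
      finally show "norm (norm (f p ^ k * T k)) \<le> inverse (fact k) * (\<bar>f p\<bar> * C) ^ k" .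
    qed
  qed
  have m0: "0 \<le> mom k" for k
    unfolding mom[symmetric] by (rule integral_nonneg_AE) (use nn in \<open>auto\<close>)
  have ni: "(\<integral>p. norm (f p ^ k * T k) \<partial>\<mu>) = mom k * \<bar>T k\<bar>" for k
  proof -
    have "(\<integral>p. norm (f p ^ k * T k) \<partial>\<mu>) = (\<integral>p. f p ^ k * \<bar>T k\<bar> \<partial>\<mu>)"
    proof (rule integral_cong_AE)
      show "AE p in \<mu>. norm (f p ^ k * T k) = f p ^ k * \<bar>T k\<bar>"
        using nn by (rule eventually_mono) (simp add: abs_mult)
    qed simp_all
    then show ?thesis using mom by simp
  qed
  have s2: "summable (\<lambda>k. (\<integral>p. norm (f p ^ k * T k) \<partial>\<mu>))"
    unfolding ni
  proof (rule summable_comparison_test'[where N=0])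
    show "summable (\<lambda>k. inverse (fact k) * C ^ k)" by (rule summable_exp)
    fix k :: nat
    have "norm (mom k * \<bar>T k\<bar>) = mom k * \<bar>T k\<bar>" using m0 by simp
    also have "\<dots> \<le> fact k * (C ^ k / (fact k)^2)"
      using momb[of k] Tb[of k] m0[of k] by (intro mult_mono) auto
    also have "\<dots> = inverse (fact k) * C ^ k" by (simp add: power2_eq_square field_simps)
    finally show "norm (mom k * \<bar>T k\<bar>) \<le> inverse (fact k) * C ^ k" .
  qed
  have "(\<integral>p. (\<Sum>k. f p ^ k * T k) \<partial>\<mu>) = (\<Sum>k. (\<integral>p. f p ^ k * T k \<partial>\<mu>))"
    by (rule integral_suminf[OF i s1 s2])
  also have "\<dots> = (\<Sum>k. mom k * T k)" using mom by simp
  finally show ?thesis .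
qed

lemma gamma_half_le: "Gamma (real k / 2 + 1) \<le> fact k"
proof (cases "k = 0")
  case True then show ?thesis by simp
next
  case False
  then have "Gamma (real k / 2 + 1) < Gamma (real k + 1)"
    by (intro Gamma_real_strict_mono) auto
  also have "Gamma (real k + 1) = fact k" using Gamma_fact[of k] by (simp add: add.commute)
  finally show ?thesis by simp
qed

lemma beta_ratio:
  assumes m: "(m::real) > 0"
  shows "Beta (real k + 1) m / Beta 1 m \<le> fact k"
    and "Beta (real k + 1) m / Beta 1 m = Gamma (m + 1) * Gamma (real k + 1) / Gamma (real k + m + 1)"
proof -
  have B: "Beta 1 m > 0" using m by (simp add: Beta_pos)
  have "Beta (real k + 1) m \<le> Beta 1 m" using m by (intro Beta_real_mono) auto
  then have "Beta (real k + 1) m / Beta 1 m \<le> 1" using B by simp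
  also have "1 \<le> (fact k :: real)" by (rule fact_ge_1)
  finally show "Beta (real k + 1) m / Beta 1 m \<le> fact k" .
  have g1: "Gamma m > 0" "Gamma (1 + m) > 0" "Gamma (real k + 1 + m) > 0" using m by auto
  have e: "real k + 1 + m = real k + m + 1" "1 + m = m + 1" by simp_all
  show "Beta (real k + 1) m / Beta 1 m = Gamma (m + 1) * Gamma (real k + 1) / Gamma (real k + m + 1)"
    using g1 unfolding Beta_def e by (simp add: field_simps)
qed

lemma words_finite: "finite (words k :: 'a::euclidean_space list set)"
  unfolding words_def using finite_lists_length_eq[OF finite_Basis, of k] by (simp add: conj_commute)

lemma words_card: "card (words k :: 'a::euclidean_space list set) = DIM('a) ^ k"
  unfolding words_def using card_lists_length_eq[OF finite_Basis, of k] by (simp add: conj_commute)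




theorem mainTheorem7:
  fixes \<gamma> \<sigma> :: "real \<Rightarrow> 'a::euclidean_space" and a b s t :: real
  assumes "a \<le> b"
    and "continuous_on {a..b} \<gamma>" and "continuous_on {a..b} \<sigma>"
    and "bounded_variation_on a b \<gamma>" and "bounded_variation_on a b \<sigma>"
    and "s \<in> {a..b}" and "t \<in> {a..b}"
  shows
    "(sig_kernel (\<lambda>k. Gamma (real k / 2 + 1)) \<gamma> \<sigma> a s t
       = (\<integral>p. sig_kernel (\<lambda>_. 1) (rescale_path (sqrt p) \<gamma>) \<sigma> a s t
              \<partial>(density lborel (exponential_density 1)))
     \<and> sig_kernel (\<lambda>k. Gamma (real k / 2 + 1)) \<gamma> \<sigma> a s t
       = (\<integral>p. sig_kernel (\<lambda>_. 1) \<gamma> (rescale_path (sqrt p) \<sigma>) a s t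
              \<partial>(density lborel (exponential_density 1))))
     \<and> (\<forall>m::real. m > 0 \<longrightarrow>
       sig_kernel (\<lambda>k. Gamma (m + 1) * Gamma (real k + 1) / Gamma (real k + m + 1)) \<gamma> \<sigma> a s t
         = (\<integral>p. sig_kernel (\<lambda>_. 1) (rescale_path p \<gamma>) \<sigma> a s t
              \<partial>(density lborel (beta_density 1 m)))
       \<and> sig_kernel (\<lambda>k. Gamma (m + 1) * Gamma (real k + 1) / Gamma (real k + m + 1)) \<gamma> \<sigma> a s t
         = (\<integral>p. sig_kernel (\<lambda>_. 1) \<gamma> (rescale_path p \<sigma>) a s t
              \<partial>(density lborel (beta_density 1 m))))"
proof -
  note sg = sigrev_props[OF assms(1,2,4)]
  note ss = sigrev_props[OF assms(1,3,5)]
  define T where "T k = tensor_inner k (sig_coord \<gamma> a s) (sig_coord \<sigma> a t)" for k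
  have wk: "set (rev w) \<subseteq> Basis" "length (rev w) = k" if "w \<in> (words k :: 'a list set)" for w k
    using that by (auto simp: words_def)
  have scg: "tensor_inner k (sig_coord (rescale_path c \<gamma>) a s) (sig_coord \<sigma> a t) = c ^ k * T k" for c k
    unfolding T_def tensor_inner_def sum_distrib_left
  proof (intro sum.cong refl)
    fix w :: "'a list" assume w: "w \<in> words k"
    have "sig_rev (rescale_path c \<gamma>) a (rev w) s = c ^ k * sig_rev \<gamma> a (rev w) s"
      using sg[OF wk(1)[OF w]] wk(2)[OF w] assms(6) by auto
    then show "sig_coord (rescale_path c \<gamma>) a s w * sig_coord \<sigma> a t w = c ^ k * (sig_coord \<gamma> a s w * sig_coord \<sigma> a t w)"
      by (simp add: sig_coord_def)
  qed
  have scs: "tensor_inner k (sig_coord \<gamma> a s) (sig_coord (rescale_path c \<sigma>) a t) = c ^ k * T k" for c k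
    unfolding T_def tensor_inner_def sum_distrib_left
  proof (intro sum.cong refl)
    fix w :: "'a list" assume w: "w \<in> words k"
    have "sig_rev (rescale_path c \<sigma>) a (rev w) t = c ^ k * sig_rev \<sigma> a (rev w) t"
      using ss[OF wk(1)[OF w]] wk(2)[OF w] assms(7) by auto
    then show "sig_coord \<gamma> a s w * sig_coord (rescale_path c \<sigma>) a t w = c ^ k * (sig_coord \<gamma> a s w * sig_coord \<sigma> a t w)"
      by (simp add: sig_coord_def)
  qed
  define Vg where "Vg = varf \<gamma> a s"
  define Vs where "Vs = varf \<sigma> a t"
  have Vg: "0 \<le> Vg" unfolding Vg_def using varf_nonneg[OF assms(4)] assms(6) by auto
  have Vs: "0 \<le> Vs" unfolding Vs_def using varf_nonneg[OF assms(5)] assms(7) by auto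
  define C where "C = real DIM('a) * Vg * Vs"
  have C: "0 \<le> C" unfolding C_def using Vg Vs by simp
  have Tb: "\<bar>T k\<bar> \<le> C ^ k / (fact k)^2" for k
  proof -
    have "\<bar>T k\<bar> \<le> (\<Sum>w\<in>words k. \<bar>sig_coord \<gamma> a s w * sig_coord \<sigma> a t w\<bar>)"
      unfolding T_def tensor_inner_def by (rule sum_abs)
    also have "\<dots> \<le> (\<Sum>w\<in>(words k :: 'a list set). (Vg ^ k / fact k) * (Vs ^ k / fact k))"
    proof (intro sum_mono)
      fix w :: "'a list" assume w: "w \<in> words k"
      have "\<bar>sig_coord \<gamma> a s w\<bar> \<le> Vg ^ k / fact k"
        using sg[OF wk(1)[OF w]] wk(2)[OF w] assms(6) unfolding Vg_def sig_coord_def by auto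
      moreover have "\<bar>sig_coord \<sigma> a t w\<bar> \<le> Vs ^ k / fact k"
        using ss[OF wk(1)[OF w]] wk(2)[OF w] assms(7) unfolding Vs_def sig_coord_def by auto
      ultimately show "\<bar>sig_coord \<gamma> a s w * sig_coord \<sigma> a t w\<bar> \<le> (Vg ^ k / fact k) * (Vs ^ k / fact k)"
        unfolding abs_mult by (intro mult_mono) auto
    qed
    also have "\<dots> = real (DIM('a) ^ k) * ((Vg ^ k / fact k) * (Vs ^ k / fact k))"
      using words_card[where 'a='a, of k] by simp
    also have "\<dots> = C ^ k / (fact k)^2"
      unfolding C_def by (simp add: power_mult_distrib power2_eq_square)
    finally show ?thesis .
  qed
  have K1: "sig_kernel (\<lambda>_. 1) (rescale_path c \<gamma>) \<sigma> a s t = (\<Sum>k. c ^ k * T k)" for c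
    unfolding sig_kernel_def scg by simp
  have K2: "sig_kernel (\<lambda>_. 1) \<gamma> (rescale_path c \<sigma>) a s t = (\<Sum>k. c ^ k * T k)" for c
    unfolding sig_kernel_def scs by simp
  have KP: "sig_kernel \<phi> \<gamma> \<sigma> a s t = (\<Sum>k. \<phi> k * T k)" for \<phi>
    unfolding sig_kernel_def T_def ..
  have dmE: "exponential_density 1 \<in> borel_measurable lborel" unfolding exponential_density_def by measurable
  have EX: "(\<integral>p. (\<Sum>k. sqrt p ^ k * T k) \<partial>density lborel (exponential_density 1))
      = (\<Sum>k. Gamma (real k / 2 + 1) * T k)"
  proof (rule exchange[OF _ _ _ _ gamma_half_le C Tb])
    show "sqrt \<in> borel_measurable (density lborel (exponential_density 1))" by measurable
    show "integrable (density lborel (exponential_density 1)) (\<lambda>p. sqrt p ^ k)" for k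
      using exp_moment by blast
    show "(\<integral>p. sqrt p ^ k \<partial>density lborel (exponential_density 1)) = Gamma (real k / 2 + 1)" for k
      using exp_moment by blast
    show "AE p in density lborel (exponential_density 1). 0 \<le> sqrt p"
      using dmE by (subst AE_density) (auto simp: exponential_density_def)
  qed
  have BX: "(\<integral>p. (\<Sum>k. p ^ k * T k) \<partial>density lborel (beta_density 1 m))
      = (\<Sum>k. (Beta (real k + 1) m / Beta 1 m) * T k)" if m: "m > 0" for m
  proof (rule exchange[OF _ _ _ _ beta_ratio(1)[OF m] C Tb])
    show "(\<lambda>p. p) \<in> borel_measurable (density lborel (beta_density 1 m))" by measurable
    show "integrable (density lborel (beta_density 1 m)) (\<lambda>p. p ^ k)" for k
      using beta_moment[OF m] by blast
    show "(\<integral>p. p ^ k \<partial>density lborel (beta_density 1 m)) = Beta (real k + 1) m / Beta 1 m" for k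
      using beta_moment[OF m] by blast
    have dmB: "beta_density 1 m \<in> borel_measurable lborel" unfolding beta_density_def by measurable
    show "AE p in density lborel (beta_density 1 m). 0 \<le> p"
      using dmB by (subst AE_density) (auto simp: beta_density_def split: if_splits)
  qed
  show ?thesis
  proof (intro conjI allI impI)
    show "sig_kernel (\<lambda>k. Gamma (real k / 2 + 1)) \<gamma> \<sigma> a s t
       = (\<integral>p. sig_kernel (\<lambda>_. 1) (rescale_path (sqrt p) \<gamma>) \<sigma> a s t \<partial>(density lborel (exponential_density 1)))"
      unfolding K1 KP EX ..
    show "sig_kernel (\<lambda>k. Gamma (real k / 2 + 1)) \<gamma> \<sigma> a s t
       = (\<integral>p. sig_kernel (\<lambda>_. 1) \<gamma> (rescale_path (sqrt p) \<sigma>) a s t \<partial>(density lborel (exponential_density 1)))"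
      unfolding K2 KP EX ..
    fix m :: real assume m: "m > 0"
    have eqm: "(\<Sum>k. Gamma (m + 1) * Gamma (real k + 1) / Gamma (real k + m + 1) * T k)
        = (\<Sum>k. (Beta (real k + 1) m / Beta 1 m) * T k)"
      using beta_ratio(2)[OF m] by simp
    show "sig_kernel (\<lambda>k. Gamma (m + 1) * Gamma (real k + 1) / Gamma (real k + m + 1)) \<gamma> \<sigma> a s t
         = (\<integral>p. sig_kernel (\<lambda>_. 1) (rescale_path p \<gamma>) \<sigma> a s t \<partial>(density lborel (beta_density 1 m)))"
      unfolding K1 KP BX[OF m] eqm ..
    show "sig_kernel (\<lambda>k. Gamma (m + 1) * Gamma (real k + 1) / Gamma (real k + m + 1)) \<gamma> \<sigma> a s t
         = (\<integral>p. sig_kernel (\<lambda>_. 1) \<gamma> (rescale_path p \<sigma>) a s t \<partial>(density lborel (beta_density 1 m)))"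
      unfolding K2 KP BX[OF m] eqm ..
  qed
qed


end
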